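(* Consider a radial three-phase distribution grid on buses $\{0,\ldots,N\}$ (feeder bus $0$, each bus $n\geq1$ with parent $\pi_n<n$, line $n$ joining $\pi_n$ and $n$), with symmetric phase impedance matrices $\mathbf{Z}_n=\mathbf{Z}_n^{\top}\in\mathbb{C}^{3\times3}$, and let $\mathbf{X}:=2\mathbf{M}\,\mathrm{bdiag}(\{\mathrm{Im}[\tilde{\mathbf{Z}}_n]\})\mathbf{M}^{\top}\in\mathbb{R}^{3N\times3N}$, assumed invertible. Let $\mathbf{U}\mathbf{\Lambda}\mathbf{U}^{\top}$ be an eigenvalue decomposition of $\mathbf{X}\mathbf{X}^{\top}$ ($\mathbf{U}$ orthogonal, $\mathbf{\Lambda}$ diagonal with positive entries). If \[\mu\in\left(0,\ \lambda_{\min}\!\left(\mathbf{\Lambda}^{-1/2}\mathbf{U}^{\top}(\mathbf{X}+\mathbf{X}^{\top})\mathbf{U}\mathbf{\Lambda}^{-1/2}\right)\right),\] then $\|\mathbf{I}-\mu\mathbf{X}\|_2<1$.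
   Context: $\tilde{\mathbf{Z}}_n:=\operatorname{diag}(\boldsymbol{\alpha}^* )\mathbf{Z}_n\operatorname{diag}(\boldsymbol{\alpha})$ with $\boldsymbol{\alpha}:=[1~\alpha~\alpha^2]^{\top}$, $\alpha=e^{-j2\pi/3}$; $^*$ is entrywise conjugation and $\mathrm{Im}$ is entrywise. $\mathbf{M}:=\mathbf{T}(\mathbf{I}_3\otimes\mathbf{F})\mathbf{T}^{\top}$, where: the full branch-bus incidence matrix $\tilde{\mathbf{A}}=[\mathbf{a}_0~\mathbf{A}]\in\mathbb{R}^{N\times(N+1)}$ has in row $n$ entry $+1$ at column $\pi_n$, $-1$ at column $n$, zeros elsewhere; $\mathbf{A}$ is the reduced incidence matrix (column of bus $0$ removed); $\mathbf{F}:=-\mathbf{A}^{-1}$; $\mathbf{T}:=[\mathbf{I}_3\otimes\mathbf{e}_1^{\top};\ldots;\mathbf{I}_3\otimes\mathbf{e}_N^{\top}]$ (blocks stacked vertically) with $\mathbf{e}_n$ the $n$-th column of $\mathbf{I}_N$. $\mathrm{bdiag}$ denotes a block diagonal matrix. $\|\cdot\|_2$ is the spectral norm; $\lambda_{\min}$ is the smallest eigenvalue of a symmetric matrix. *)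

theory Defs
  imports "Jordan_Normal_Form.Matrix" "Jordan_Normal_Form.Char_Poly" Complex_Main
begin

(* Matrices are 0-indexed: row i of the incidence matrices is line i+1,
   column j of the full incidence matrix is bus j, of the reduced one bus j+1. *)

definition full_incidence :: "nat \<Rightarrow> (nat \<Rightarrow> nat) \<Rightarrow> real mat" where
  "full_incidence N par = mat N (N+1) (\<lambda>(i,j).
      if j = par (i+1) then 1 else if j = i+1 then -1 else 0)"

definition red_incidence :: "nat \<Rightarrow> (nat \<Rightarrow> nat) \<Rightarrow> real mat" where
  "red_incidence N par = mat N N (\<lambda>(i,j). full_incidence N par $$ (i, j+1))"

definition inv_mat :: "real mat \<Rightarrow> real mat" where
  "inv_mat A = (THE B. B \<in> carrier_mat (dim_row A) (dim_row A) \<and>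
                 A * B = 1\<^sub>m (dim_row A) \<and> B * A = 1\<^sub>m (dim_row A))"

definition Fmat :: "nat \<Rightarrow> (nat \<Rightarrow> nat) \<Rightarrow> real mat" where
  "Fmat N par = - inv_mat (red_incidence N par)"

definition kron :: "'a::times mat \<Rightarrow> 'a mat \<Rightarrow> 'a mat" where
  "kron A B = mat (dim_row A * dim_row B) (dim_col A * dim_col B)
     (\<lambda>(i,j). A $$ (i div dim_row B, j div dim_col B) * B $$ (i mod dim_row B, j mod dim_col B))"

definition unit_row :: "nat \<Rightarrow> nat \<Rightarrow> real mat" where
  "unit_row N n = mat 1 N (\<lambda>(i,j). if j = n - 1 then 1 else 0)"

(* T = [I3 (x) e_1^T; ... ; I3 (x) e_N^T], blocks stacked vertically *)
definition Tmat :: "nat \<Rightarrow> real mat" where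
  "Tmat N = mat (3*N) (3*N) (\<lambda>(i,j). kron (1\<^sub>m 3) (unit_row N (i div 3 + 1)) $$ (i mod 3, j))"

definition Mmat :: "nat \<Rightarrow> (nat \<Rightarrow> nat) \<Rightarrow> real mat" where
  "Mmat N par = Tmat N * kron (1\<^sub>m 3) (Fmat N par) * transpose_mat (Tmat N)"

definition alpha :: complex where "alpha = cis (- 2 * pi / 3)"

definition alpha_vec :: "nat \<Rightarrow> complex" where "alpha_vec k = alpha ^ k"

definition Ztilde :: "complex mat \<Rightarrow> complex mat" where
  "Ztilde Z = mat_diag 3 (\<lambda>k. cnj (alpha_vec k)) * Z * mat_diag 3 alpha_vec"

definition bdiag_ImZ :: "nat \<Rightarrow> (nat \<Rightarrow> complex mat) \<Rightarrow> real mat" where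
  "bdiag_ImZ N Z = mat (3*N) (3*N) (\<lambda>(i,j).
     if i div 3 = j div 3 then Im (Ztilde (Z (i div 3 + 1)) $$ (i mod 3, j mod 3)) else 0)"

definition Xmat :: "nat \<Rightarrow> (nat \<Rightarrow> nat) \<Rightarrow> (nat \<Rightarrow> complex mat) \<Rightarrow> real mat" where
  "Xmat N par Z = 2 \<cdot>\<^sub>m (Mmat N par * bdiag_ImZ N Z * transpose_mat (Mmat N par))"

definition vnorm :: "real vec \<Rightarrow> real" where "vnorm x = sqrt (x \<bullet> x)"

definition spec_norm :: "real mat \<Rightarrow> real" where
  "spec_norm A = Sup {vnorm (A *\<^sub>v x) | x. x \<in> carrier_vec (dim_col A) \<and> vnorm x = 1}"

definition lambda_min :: "real mat \<Rightarrow> real" where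
  "lambda_min A = Min {k. eigenvalue A k}"

end

theory Submission
  imports Defs
begin

lemma quad_disc:
  fixes a b c :: real
  assumes a: "a \<ge> 0" and c: "c \<ge> 0" and q: "\<And>t. 0 \<le> a + 2*b*t + c*t^2"
  shows "b^2 \<le> a*c"
proof (cases "c = 0")
  case True
  show ?thesis
  proof (rule ccontr)
    assume "\<not> ?thesis"
    hence b: "b \<noteq> 0" using True by auto
    have "0 \<le> a + 2*b*(-(a+1)/(2*b)) + c*(-(a+1)/(2*b))^2" by (rule q)
    also have "\<dots> = -1" using True b by (simp add: field_simps)
    finally show False by simp
  qed
next
  case False
  hence cp: "c > 0" using c by auto
  have "0 \<le> a + 2*b*(-b/c) + c*(-b/c)^2" by (rule q)
  also have "\<dots> = a - b^2/c" using cp by (simp add: field_simps power2_eq_square)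
  finally have "b^2/c \<le> a" by simp
  thus ?thesis using cp by (simp add: field_simps mult.commute)
qed

lemma sp_self_ge0: "(v::real vec) \<bullet> v \<ge> 0"
  unfolding scalar_prod_def by (auto intro: sum_nonneg)

lemma sp_self_eq0: assumes "(v::real vec) \<in> carrier_vec n" "v \<bullet> v = 0" shows "v = 0\<^sub>v n"
proof -
  have "\<forall>i\<in>{0..<n}. v $ i * v $ i = 0"
    using assms by (subst sum_nonneg_eq_0_iff[symmetric]) (auto simp: scalar_prod_def)
  thus ?thesis using assms by (intro eq_vecI) auto
qed

lemma sq_le_abs: fixes a b :: real assumes "a^2 \<le> b^2" "b \<ge> 0" shows "\<bar>a\<bar> \<le> b"
  using assms abs_le_square_iff[of a b] by simp

lemma smult_mat_vec: fixes A :: "real mat" assumes "dim_vec v = dim_col A"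
  shows "(k \<cdot>\<^sub>m A) *\<^sub>v v = k \<cdot>\<^sub>v (A *\<^sub>v v)"
  by (intro eq_vecI) (use assms in \<open>auto simp: scalar_prod_def sum_distrib_left algebra_simps\<close>)

lemma transpose_smult: "transpose_mat (k \<cdot>\<^sub>m (A :: real mat)) = k \<cdot>\<^sub>m transpose_mat A"
  by (intro eq_matI) auto

lemma psd_cs:
  fixes B :: "real mat"
  assumes B: "B \<in> carrier_mat n n" and sym: "transpose_mat B = B"
    and psd: "\<And>v. v \<in> carrier_vec n \<Longrightarrow> v \<bullet> (B *\<^sub>v v) \<ge> 0"
    and y: "y \<in> carrier_vec n" and z: "z \<in> carrier_vec n"
  shows "(y \<bullet> (B *\<^sub>v z))^2 \<le> (y \<bullet> (B *\<^sub>v y)) * (z \<bullet> (B *\<^sub>v z))"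
proof (rule quad_disc[OF psd[OF y] psd[OF z]])
  fix t :: real
  have sw: "z \<bullet> (B *\<^sub>v y) = y \<bullet> (B *\<^sub>v z)"
  proof -
    have "z \<bullet> (B *\<^sub>v y) = (transpose_mat B *\<^sub>v z) \<bullet> y"
      using transpose_vec_mult_scalar[OF B y z] by simp
    also have "\<dots> = y \<bullet> (B *\<^sub>v z)" using sym comm_scalar_prod[OF _ y, of "B *\<^sub>v z"] B z by simp
    finally show ?thesis .
  qed
  have "0 \<le> (y + t \<cdot>\<^sub>v z) \<bullet> (B *\<^sub>v (y + t \<cdot>\<^sub>v z))" using psd y z by simp
  also have "B *\<^sub>v (y + t \<cdot>\<^sub>v z) = B *\<^sub>v y + t \<cdot>\<^sub>v (B *\<^sub>v z)"
    using B y z by (simp add: mult_add_distrib_mat_vec mult_mat_vec)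
  also have "(y + t \<cdot>\<^sub>v z) \<bullet> (B *\<^sub>v y + t \<cdot>\<^sub>v (B *\<^sub>v z)) =
      y \<bullet> (B *\<^sub>v y) + 2 * (y \<bullet> (B *\<^sub>v z)) * t + (z \<bullet> (B *\<^sub>v z)) * t^2"
    using B y z sw
    by (simp add: add_scalar_prod_distrib[of _ n] scalar_prod_add_distrib[of _ n] power2_eq_square algebra_simps)
  finally show "0 \<le> y \<bullet> (B *\<^sub>v y) + 2 * (y \<bullet> (B *\<^sub>v z)) * t + (z \<bullet> (B *\<^sub>v z)) * t^2" .
qed

lemma cs:
  fixes y z :: "real vec"
  assumes y: "y \<in> carrier_vec n" and z: "z \<in> carrier_vec n"
  shows "(y \<bullet> z)^2 \<le> (y \<bullet> y) * (z \<bullet> z)"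
  using psd_cs[of "1\<^sub>m n" n y z] y z sp_self_ge0 by simp

lemma mat_bound:
  fixes A :: "real mat"
  assumes A: "A \<in> carrier_mat nr nc"
  shows "\<exists>K>0. \<forall>v\<in>carrier_vec nc. (A *\<^sub>v v) \<bullet> (A *\<^sub>v v) \<le> K * (v \<bullet> v)"
proof -
  define K where "K = 1 + (\<Sum>i<nr. row A i \<bullet> row A i)"
  have Kp: "K > 0" unfolding K_def using sp_self_ge0 by (smt (verit) sum_nonneg)
  show ?thesis
  proof (intro exI[of _ K] conjI ballI Kp)
    fix v :: "real vec" assume v: "v \<in> carrier_vec nc"
    have "(A *\<^sub>v v) \<bullet> (A *\<^sub>v v) = (\<Sum>i<nr. (row A i \<bullet> v)^2)"
      using A v by (simp add: scalar_prod_def power2_eq_square lessThan_atLeast0)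
    also have "\<dots> \<le> (\<Sum>i<nr. (row A i \<bullet> row A i) * (v \<bullet> v))"
      by (intro sum_mono cs[of _ nc]) (use A v in auto)
    also have "\<dots> = (K - 1) * (v \<bullet> v)" unfolding K_def by (simp add: sum_distrib_right)
    also have "\<dots> \<le> K * (v \<bullet> v)" using sp_self_ge0[of v] by (simp add: algebra_simps)
    finally show "(A *\<^sub>v v) \<bullet> (A *\<^sub>v v) \<le> K * (v \<bullet> v)" .
  qed
qed

lemma sym_min_eig:
  fixes S :: "real mat"
  assumes S: "S \<in> carrier_mat n n" and sym: "transpose_mat S = S" and n: "n > 0"
  shows "\<exists>m. eigenvalue S m \<and> (\<forall>z\<in>carrier_vec n. m * (z \<bullet> z) \<le> z \<bullet> (S *\<^sub>v z))"
proof -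
  define Q where "Q = {(z \<bullet> (S *\<^sub>v z)) / (z \<bullet> z) | z. z \<in> carrier_vec n \<and> z \<noteq> 0\<^sub>v n}"
  have pos: "z \<bullet> z > 0" if "z \<in> carrier_vec n" "z \<noteq> 0\<^sub>v n" for z :: "real vec"
    using sp_self_ge0[of z] sp_self_eq0[OF that(1)] that(2) by force
  have "unit_vec n 0 \<in> carrier_vec n" "unit_vec n 0 \<noteq> 0\<^sub>v n"
    using n by (auto simp: unit_vec_def zero_vec_def vec_eq_iff)
  hence Qne: "Q \<noteq> {}" unfolding Q_def by blast
  obtain KS where KS: "KS > 0" "\<And>v. v \<in> carrier_vec n \<Longrightarrow> (S *\<^sub>v v) \<bullet> (S *\<^sub>v v) \<le> KS * (v \<bullet> v)"
    using mat_bound[OF S] by blast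
  have absb: "\<bar>z \<bullet> (S *\<^sub>v z)\<bar> \<le> sqrt KS * (z \<bullet> z)" if z: "z \<in> carrier_vec n" for z
  proof -
    have "(z \<bullet> (S *\<^sub>v z))^2 \<le> (z \<bullet> z) * ((S *\<^sub>v z) \<bullet> (S *\<^sub>v z))"
      using cs[OF z mult_mat_vec_carrier[OF S z]] by auto
    also have "\<dots> \<le> (z \<bullet> z) * (KS * (z \<bullet> z))"
      using KS(2)[OF z] sp_self_ge0[of z] by (intro mult_left_mono) auto
    also have "\<dots> = (sqrt KS * (z \<bullet> z))^2" using KS(1) by (simp add: power2_eq_square)
    finally show ?thesis using sp_self_ge0[of z] KS(1) by (intro sq_le_abs) auto
  qed
  have bdd: "bdd_below Q"
  proof (rule bdd_belowI[of _ "- sqrt KS"])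
    fix q assume "q \<in> Q"
    then obtain z where z: "z \<in> carrier_vec n" "z \<noteq> 0\<^sub>v n" and q: "q = (z \<bullet> (S *\<^sub>v z)) / (z \<bullet> z)"
      unfolding Q_def by blast
    have "- sqrt KS * (z \<bullet> z) \<le> z \<bullet> (S *\<^sub>v z)" using absb[OF z(1)] by linarith
    thus "- sqrt KS \<le> q" unfolding q using pos[OF z] by (simp add: field_simps)
  qed
  define m where "m = Inf Q"
  have lb: "m * (z \<bullet> z) \<le> z \<bullet> (S *\<^sub>v z)" if z: "z \<in> carrier_vec n" for z
  proof (cases "z = 0\<^sub>v n")
    case True thus ?thesis using S by simp
  next
    case False
    hence "m \<le> (z \<bullet> (S *\<^sub>v z)) / (z \<bullet> z)" unfolding m_def
      by (intro cInf_lower bdd) (use z Q_def in auto)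
    thus ?thesis using pos[OF z False] by (simp add: field_simps)
  qed
  define B where "B = S - m \<cdot>\<^sub>m 1\<^sub>m n"
  have B: "B \<in> carrier_mat n n" unfolding B_def using S by auto
  have Bv: "B *\<^sub>v v = S *\<^sub>v v - m \<cdot>\<^sub>v v" if v: "v \<in> carrier_vec n" for v
    unfolding B_def using S v by (simp add: minus_mult_distrib_mat_vec[of _ n n] smult_mat_vec)
  have Bq: "v \<bullet> (B *\<^sub>v v) = v \<bullet> (S *\<^sub>v v) - m * (v \<bullet> v)" if v: "v \<in> carrier_vec n" for v
    using Bv[OF v] v S by (simp add: scalar_prod_minus_distrib[of _ n])
  have Bsym: "transpose_mat B = B" unfolding B_def using S sym by (simp add: transpose_minus[of _ n n] transpose_smult)
  have Bpsd: "v \<bullet> (B *\<^sub>v v) \<ge> 0" if v: "v \<in> carrier_vec n" for v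
    using Bq[OF v] lb[OF v] by simp
  have "det B = 0"
  proof (rule ccontr)
    assume dB: "det B \<noteq> 0"
    from det_non_zero_imp_unit[OF B dB]
    obtain Bi where Bi: "Bi \<in> carrier_mat n n" "Bi * B = 1\<^sub>m n"
      unfolding Units_def ring_mat_def by auto
    obtain KB where KB: "KB > 0" "\<And>v. v \<in> carrier_vec n \<Longrightarrow> (B *\<^sub>v v) \<bullet> (B *\<^sub>v v) \<le> KB * (v \<bullet> v)"
      using mat_bound[OF B] by blast
    obtain Ki where Ki: "Ki > 0" "\<And>v. v \<in> carrier_vec n \<Longrightarrow> (Bi *\<^sub>v v) \<bullet> (Bi *\<^sub>v v) \<le> Ki * (v \<bullet> v)"
      using mat_bound[OF Bi(1)] by blast
    define \<delta> where "\<delta> = 1 / (Ki * sqrt KB)"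
    have dp: "\<delta> > 0" unfolding \<delta>_def using KB Ki by auto
    have key: "z \<bullet> z \<le> Ki * sqrt KB * (z \<bullet> (B *\<^sub>v z))" if z: "z \<in> carrier_vec n" for z
    proof -
      define y where "y = B *\<^sub>v z"
      have y: "y \<in> carrier_vec n" unfolding y_def using B z by auto
      have "\<bar>y \<bullet> (B *\<^sub>v y)\<bar> \<le> sqrt KB * (y \<bullet> y)"
      proof -
        have "(y \<bullet> (B *\<^sub>v y))^2 \<le> (y \<bullet> y) * ((B *\<^sub>v y) \<bullet> (B *\<^sub>v y))"
          using cs[OF y mult_mat_vec_carrier[OF B y]] by auto
        also have "\<dots> \<le> (y \<bullet> y) * (KB * (y \<bullet> y))"
          using KB(2)[OF y] sp_self_ge0[of y] by (intro mult_left_mono) auto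
        also have "\<dots> = (sqrt KB * (y \<bullet> y))^2" using KB(1) by (simp add: power2_eq_square)
        finally show ?thesis using sp_self_ge0[of y] KB(1) by (intro sq_le_abs) auto
      qed
      hence yBy: "y \<bullet> (B *\<^sub>v y) \<le> sqrt KB * (y \<bullet> y)" by linarith
      have "(y \<bullet> y)^2 \<le> (y \<bullet> (B *\<^sub>v y)) * (z \<bullet> (B *\<^sub>v z))"
        using psd_cs[OF B Bsym Bpsd y z] unfolding y_def by simp
      also have "\<dots> \<le> (sqrt KB * (y \<bullet> y)) * (z \<bullet> (B *\<^sub>v z))"
        using yBy Bpsd[OF z] by (intro mult_right_mono) auto
      finally have h: "(y \<bullet> y) * (y \<bullet> y) \<le> (y \<bullet> y) * (sqrt KB * (z \<bullet> (B *\<^sub>v z)))"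
        by (simp add: power2_eq_square algebra_simps)
      have yy: "y \<bullet> y \<le> sqrt KB * (z \<bullet> (B *\<^sub>v z))"
      proof (cases "y \<bullet> y = 0")
        case True thus ?thesis using Bpsd[OF z] KB by simp
      next
        case False
        hence "y \<bullet> y > 0" using sp_self_ge0[of y] by simp
        thus ?thesis using h by simp
      qed
      have "z = Bi *\<^sub>v y" unfolding y_def using Bi B z
        by (simp flip: assoc_mult_mat_vec[of Bi n n B n z])
      hence "z \<bullet> z \<le> Ki * (y \<bullet> y)" using Ki(2)[OF y] by simp
      also have "\<dots> \<le> Ki * (sqrt KB * (z \<bullet> (B *\<^sub>v z)))" using yy Ki(1) by simp
      finally show ?thesis by simp
    qed
    have "m + \<delta> \<le> Inf Q"
    proof (rule cInf_greatest[OF Qne])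
      fix q assume "q \<in> Q"
      then obtain z where z: "z \<in> carrier_vec n" "z \<noteq> 0\<^sub>v n" and q: "q = (z \<bullet> (S *\<^sub>v z)) / (z \<bullet> z)"
        unfolding Q_def by blast
      have "\<delta> * (z \<bullet> z) \<le> z \<bullet> (B *\<^sub>v z)" using key[OF z(1)] KB Ki unfolding \<delta>_def
        by (simp add: field_simps)
      hence "(m + \<delta>) * (z \<bullet> z) \<le> z \<bullet> (S *\<^sub>v z)" using Bq[OF z(1)] by (simp add: algebra_simps)
      thus "m + \<delta> \<le> q" unfolding q using pos[OF z] by (simp add: field_simps)
    qed
    thus False using dp unfolding m_def by simp
  qed
  then obtain v where v: "v \<in> carrier_vec n" "v \<noteq> 0\<^sub>v n" "B *\<^sub>v v = 0\<^sub>v n"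
    using det_0_iff_vec_prod_zero_field[OF B] by blast
  have "S *\<^sub>v v = m \<cdot>\<^sub>v v"
  proof -
    have "S *\<^sub>v v - m \<cdot>\<^sub>v v = 0\<^sub>v n" using Bv[OF v(1)] v(3) by simp
    hence h: "S *\<^sub>v v - m \<cdot>\<^sub>v v = 0\<^sub>v n" .
    show ?thesis
    proof (rule eq_vecI)
      fix i assume i: "i < dim_vec (m \<cdot>\<^sub>v v)"
      hence i': "i < n" using v by simp
      have "(S *\<^sub>v v - m \<cdot>\<^sub>v v) $ i = 0" using h i' by simp
      thus "(S *\<^sub>v v) $ i = (m \<cdot>\<^sub>v v) $ i" using S v(1) i' by simp
    qed (use S v in auto)
  qed
  hence "eigenvalue S m" unfolding eigenvalue_def eigenvector_def using v S by auto
  thus ?thesis using lb by blast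
qed

lemma lambda_min_le:
  fixes S :: "real mat"
  assumes S: "S \<in> carrier_mat n n" and e: "eigenvalue S m"
  shows "lambda_min S \<le> m"
proof -
  have "char_poly S \<noteq> 0" using degree_monic_char_poly[OF S] by auto
  hence "finite {k. poly (char_poly S) k = 0}" by (rule poly_roots_finite)
  hence "finite {k. eigenvalue S k}" using eigenvalue_root_char_poly[OF S] by simp
  thus ?thesis unfolding lambda_min_def using e by (intro Min_le) auto
qed

lemma vnorm_unit: "vnorm x = 1 \<longleftrightarrow> x \<bullet> x = 1"
  unfolding vnorm_def by auto

lemma main_abstract:
  fixes X U :: "real mat" and lam :: "nat \<Rightarrow> real" and \<mu> :: real
  assumes n: "n > 0" and X: "X \<in> carrier_mat n n" and Xinv: "invertible_mat X"
    and U: "U \<in> carrier_mat n n"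
    and Uorth: "transpose_mat U * U = 1\<^sub>m n" "U * transpose_mat U = 1\<^sub>m n"
    and lampos: "\<forall>i < n. lam i > 0"
    and eig: "X * transpose_mat X = U * mat_diag n lam * transpose_mat U"
    and mu_pos: "0 < \<mu>"
    and mu_lt: "\<mu> < lambda_min (mat_diag n (\<lambda>i. 1 / sqrt (lam i)) * transpose_mat U
                  * (X + transpose_mat X) * U * mat_diag n (\<lambda>i. 1 / sqrt (lam i)))"
  shows "spec_norm (1\<^sub>m n - \<mu> \<cdot>\<^sub>m X) < 1"
proof -
  define D where "D = mat_diag n (\<lambda>i. 1 / sqrt (lam i))"
  define E where "E = mat_diag n (\<lambda>i. sqrt (lam i))"
  define Y where "Y = X + transpose_mat X"
  define W where "W = D * transpose_mat U"
  define Wt where "Wt = U * D"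
  define S where "S = D * transpose_mat U * Y * U * D"
  have D: "D \<in> carrier_mat n n" and E: "E \<in> carrier_mat n n" unfolding D_def E_def by auto
  have Y: "Y \<in> carrier_mat n n" unfolding Y_def using X by auto
  have UT: "transpose_mat U \<in> carrier_mat n n" using U by auto
  have W: "W \<in> carrier_mat n n" and Wt: "Wt \<in> carrier_mat n n" unfolding W_def Wt_def using D U by auto
  have S: "S \<in> carrier_mat n n" unfolding S_def using D U Y by auto
  have DT: "transpose_mat D = D" unfolding D_def by (intro eq_matI) (auto simp: mat_diag_def)
  have WT: "transpose_mat W = Wt" unfolding W_def Wt_def using D U DT by (simp add: transpose_mult[of _ n n])
  have YT: "transpose_mat Y = Y" unfolding Y_def using X by (simp add: transpose_add[of _ n n] comm_add_mat[of _ n n])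
  have Seq: "S = W * Y * Wt" unfolding S_def W_def Wt_def using D U Y UT
    by (simp add: assoc_mult_mat[of _ n n _ n _ n])
  have WtT: "transpose_mat Wt = W" using WT by (metis transpose_transpose)
  have Ssym: "transpose_mat S = S"
  proof -
    have "transpose_mat (W * Y * Wt) = transpose_mat Wt * transpose_mat (W * Y)"
      using W Y Wt by (intro transpose_mult[of _ n n]) auto
    also have "\<dots> = W * (Y * Wt)" using W Y Wt WT YT WtT
      by (simp add: transpose_mult[of _ n n] assoc_mult_mat[of _ n n _ n _ n])
    finally show ?thesis unfolding Seq using W Y Wt by (simp add: assoc_mult_mat[of _ n n _ n _ n])
  qed
  obtain m where m: "eigenvalue S m" "\<And>z. z \<in> carrier_vec n \<Longrightarrow> m * (z \<bullet> z) \<le> z \<bullet> (S *\<^sub>v z)"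
    using sym_min_eig[OF S Ssym n] by blast
  have mmu: "\<mu> < m" using mu_lt lambda_min_le[OF S m(1)] unfolding S_def D_def Y_def by simp
  from Xinv obtain Xi where XXi: "X * Xi = 1\<^sub>m n" and XiX: "Xi * X = 1\<^sub>m (dim_row Xi)"
    unfolding invertible_mat_def inverts_mat_def using X by auto
  have Xi: "Xi \<in> carrier_mat n n"
  proof -
    have "dim_col Xi = n" using XXi X by (metis carrier_matD(2) dim_col_mat(1) index_mult_mat(3) index_one_mat(3))
    moreover have "dim_row Xi = n" using XiX X
      by (metis carrier_matD(2) index_mult_mat(3) index_one_mat(3))
    ultimately show ?thesis by auto
  qed
  have XiX': "Xi * X = 1\<^sub>m n" using XiX Xi by simp
  define L where "L = mat_diag n lam"
  define G where "G = X * transpose_mat X"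
  have L: "L \<in> carrier_mat n n" unfolding L_def by simp
  have G: "G \<in> carrier_mat n n" unfolding G_def using X by auto
  have sq1: "1 / sqrt l * l * (1 / sqrt l) = 1" "1 / sqrt l * sqrt l = 1" if "l > 0" for l :: real
    using that by (simp_all add: field_simps)
  have DLD: "D * L * D = 1\<^sub>m n"
  proof -
    have "D * L * D = mat_diag n (\<lambda>i. 1 / sqrt (lam i) * lam i * (1 / sqrt (lam i)))"
      unfolding D_def L_def by simp
    also have "\<dots> = 1\<^sub>m n" using lampos sq1 by (intro eq_matI) (auto simp: mat_diag_def)
    finally show ?thesis .
  qed
  have DE: "D * E = 1\<^sub>m n"
  proof -
    have "D * E = mat_diag n (\<lambda>i. 1 / sqrt (lam i) * sqrt (lam i))"
      unfolding D_def E_def by simp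
    also have "\<dots> = 1\<^sub>m n" using lampos sq1 by (intro eq_matI) (auto simp: mat_diag_def)
    finally show ?thesis .
  qed
  have WGW: "W * G * Wt = 1\<^sub>m n"
  proof -
    have "W * G * Wt = D * (transpose_mat U * U) * L * (transpose_mat U * U) * D"
      unfolding W_def Wt_def G_def eig L_def[symmetric] using D U UT L
      by (simp add: assoc_mult_mat[of _ n n _ n _ n])
    also have "\<dots> = D * L * D" using D L Uorth by simp
    finally show ?thesis using DLD by simp
  qed
  have WtEU: "Wt * (E * transpose_mat U) = 1\<^sub>m n"
  proof -
    have "Wt * (E * transpose_mat U) = U * (D * E) * transpose_mat U"
      unfolding Wt_def using D U UT E by (simp add: assoc_mult_mat[of _ n n _ n _ n])
    thus ?thesis using DE Uorth U by simp
  qed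
  have XTXiT: "transpose_mat X * transpose_mat Xi = 1\<^sub>m n"
    using XiX' X Xi by (metis transpose_mult transpose_one)
  obtain Ki where Ki: "Ki > 0" "\<And>v. v \<in> carrier_vec n \<Longrightarrow> (Xi *\<^sub>v v) \<bullet> (Xi *\<^sub>v v) \<le> Ki * (v \<bullet> v)"
    using mat_bound[OF Xi] by blast
  define \<delta> where "\<delta> = \<mu> * (m - \<mu>) / Ki"
  have dpos: "\<delta> > 0" unfolding \<delta>_def using mu_pos mmu Ki by auto
  define A where "A = 1\<^sub>m n - \<mu> \<cdot>\<^sub>m X"
  have A: "A \<in> carrier_mat n n" unfolding A_def using X by auto
  have bound: "(A *\<^sub>v x) \<bullet> (A *\<^sub>v x) \<le> (1 - \<delta>) * (x \<bullet> x)" if x: "x \<in> carrier_vec n" for x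
  proof -
    define u where "u = X *\<^sub>v x"
    define y where "y = transpose_mat Xi *\<^sub>v u"
    define z where "z = (E * transpose_mat U) *\<^sub>v y"
    have u: "u \<in> carrier_vec n" unfolding u_def using X x by auto
    have y: "y \<in> carrier_vec n" unfolding y_def using Xi u by auto
    have z: "z \<in> carrier_vec n" unfolding z_def using E UT y by auto
    have xu: "x = Xi *\<^sub>v u"
    proof -
      have "Xi *\<^sub>v u = (Xi * X) *\<^sub>v x" unfolding u_def using Xi X x by (rule assoc_mult_mat_vec[symmetric])
      thus ?thesis using XiX' x by simp
    qed
    have yz: "Wt *\<^sub>v z = y"
    proof -
      have "Wt *\<^sub>v z = (Wt * (E * transpose_mat U)) *\<^sub>v y" unfolding z_def
        using Wt E UT y by (intro assoc_mult_mat_vec[symmetric]) auto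
      thus ?thesis using WtEU y by simp
    qed
    have uy: "transpose_mat X *\<^sub>v y = u"
    proof -
      have "transpose_mat X *\<^sub>v y = (transpose_mat X * transpose_mat Xi) *\<^sub>v u" unfolding y_def
        using Xi X u by (intro assoc_mult_mat_vec[symmetric]) auto
      thus ?thesis using XTXiT u by simp
    qed
    have "u \<bullet> u = (transpose_mat X *\<^sub>v y) \<bullet> (transpose_mat X *\<^sub>v y)" using uy by simp
    also have "\<dots> = y \<bullet> (X *\<^sub>v (transpose_mat X *\<^sub>v y))"
      using transpose_vec_mult_scalar[OF X _ y, of "transpose_mat X *\<^sub>v y"] X y by simp
    also have "\<dots> = y \<bullet> (G *\<^sub>v y)" unfolding G_def using X y by simp
    also have "\<dots> = (transpose_mat W *\<^sub>v z) \<bullet> (G *\<^sub>v (Wt *\<^sub>v z))" using yz WT by simp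
    also have "\<dots> = z \<bullet> (W *\<^sub>v (G *\<^sub>v (Wt *\<^sub>v z)))"
      using transpose_vec_mult_scalar[OF W _ z, of "G *\<^sub>v (Wt *\<^sub>v z)"] G Wt z by simp
    also have "\<dots> = z \<bullet> ((W * G * Wt) *\<^sub>v z)"
    proof -
      have "(W * G * Wt) *\<^sub>v z = (W * G) *\<^sub>v (Wt *\<^sub>v z)" using W G Wt z
        by (intro assoc_mult_mat_vec) auto
      also have "\<dots> = W *\<^sub>v (G *\<^sub>v (Wt *\<^sub>v z))" using W G Wt z
        by (intro assoc_mult_mat_vec) auto
      finally show ?thesis by simp
    qed
    also have "\<dots> = z \<bullet> z" using WGW z by simp
    finally have uu: "u \<bullet> u = z \<bullet> z" .
    have "(W * Y * Wt) *\<^sub>v z = (W * Y) *\<^sub>v (Wt *\<^sub>v z)" using W Y Wt z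
      by (intro assoc_mult_mat_vec) auto
    also have "\<dots> = W *\<^sub>v (Y *\<^sub>v (Wt *\<^sub>v z))" using W Y Wt z
      by (intro assoc_mult_mat_vec) auto
    finally have "z \<bullet> (S *\<^sub>v z) = z \<bullet> (W *\<^sub>v (Y *\<^sub>v (Wt *\<^sub>v z)))" unfolding Seq by simp
    also have "\<dots> = (transpose_mat W *\<^sub>v z) \<bullet> (Y *\<^sub>v (Wt *\<^sub>v z))"
      using transpose_vec_mult_scalar[OF W _ z, of "Y *\<^sub>v (Wt *\<^sub>v z)"] Y Wt z by simp
    also have "\<dots> = y \<bullet> (Y *\<^sub>v y)" using yz WT by simp
    finally have zSz: "z \<bullet> (S *\<^sub>v z) = y \<bullet> (Y *\<^sub>v y)" .
    have yXy: "y \<bullet> (X *\<^sub>v y) = u \<bullet> y"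
      using transpose_vec_mult_scalar[OF X y y] uy by simp
    have yu: "y \<bullet> u = x \<bullet> u"
    proof -
      have "y \<bullet> u = u \<bullet> (Xi *\<^sub>v u)" unfolding y_def using transpose_vec_mult_scalar[OF Xi u u] .
      also have "\<dots> = x \<bullet> u" using xu comm_scalar_prod[OF u x] by simp
      finally show ?thesis .
    qed
    have "y \<bullet> (Y *\<^sub>v y) = y \<bullet> (X *\<^sub>v y) + y \<bullet> (transpose_mat X *\<^sub>v y)"
      unfolding Y_def using X y by (simp add: add_mult_distrib_mat_vec[of _ n n] scalar_prod_add_distrib[of _ n])
    also have "\<dots> = 2 * (x \<bullet> u)" using yXy yu uy comm_scalar_prod[OF u y] by simp
    finally have key: "2 * (x \<bullet> u) \<ge> m * (u \<bullet> u)" using m(2)[OF z] zSz uu by simp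
    have Ax: "A *\<^sub>v x = x - \<mu> \<cdot>\<^sub>v u" unfolding A_def u_def using X x
      by (simp add: minus_mult_distrib_mat_vec[of _ n n] smult_mat_vec)
    have "(A *\<^sub>v x) \<bullet> (A *\<^sub>v x) = x \<bullet> x - 2 * \<mu> * (x \<bullet> u) + \<mu>^2 * (u \<bullet> u)"
      unfolding Ax using x u comm_scalar_prod[OF u x]
      by (simp add: minus_scalar_prod_distrib[of _ n] scalar_prod_minus_distrib[of _ n] power2_eq_square algebra_simps)
    also have "\<dots> \<le> x \<bullet> x - \<mu> * (m - \<mu>) * (u \<bullet> u)"
      using key mu_pos by (simp add: algebra_simps power2_eq_square)
    also have "\<dots> \<le> x \<bullet> x - \<delta> * (x \<bullet> x)"
    proof -
      have "x \<bullet> x \<le> Ki * (u \<bullet> u)" using Ki(2)[OF u] xu by simp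
      hence "\<mu> * (m - \<mu>) / Ki * (x \<bullet> x) \<le> \<mu> * (m - \<mu>) / Ki * (Ki * (u \<bullet> u))"
        using Ki(1) mu_pos mmu by (intro mult_left_mono) auto
      hence "\<delta> * (x \<bullet> x) \<le> \<mu> * (m - \<mu>) * (u \<bullet> u)" unfolding \<delta>_def using Ki(1) by simp
      thus ?thesis by simp
    qed
    finally show ?thesis by (simp add: algebra_simps)
  qed
  define c where "c = sqrt (max 0 (1 - \<delta>))"
  have c1: "c < 1" unfolding c_def using dpos by (cases "1 - \<delta> \<le> 0") auto
  have "unit_vec n 0 \<in> carrier_vec n" "vnorm (unit_vec n 0) = 1"
    using n by (auto simp: vnorm_unit)
  hence ne: "{vnorm (A *\<^sub>v x) | x. x \<in> carrier_vec (dim_col A) \<and> vnorm x = 1} \<noteq> {}"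
    using A by blast
  have "spec_norm A \<le> c" unfolding spec_norm_def
  proof (rule cSup_least[OF ne])
    fix r assume "r \<in> {vnorm (A *\<^sub>v x) | x. x \<in> carrier_vec (dim_col A) \<and> vnorm x = 1}"
    then obtain x where x: "x \<in> carrier_vec n" "x \<bullet> x = 1" and r: "r = vnorm (A *\<^sub>v x)"
      using A by (auto simp: vnorm_unit)
    have "(A *\<^sub>v x) \<bullet> (A *\<^sub>v x) \<le> max 0 (1 - \<delta>)" using bound[OF x(1)] x(2) by simp
    thus "r \<le> c" unfolding r c_def vnorm_def by simp
  qed
  thus ?thesis using c1 unfolding A_def by simp
qed

theorem proposition6:
  fixes N :: nat and par :: "nat \<Rightarrow> nat" and Z :: "nat \<Rightarrow> complex mat"
    and U :: "real mat" and lam :: "nat \<Rightarrow> real" and \<mu> :: real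
  assumes N: "N \<ge> 1"
    and parent: "\<forall>n \<in> {1..N}. par n < n"
    and Zdim: "\<forall>n \<in> {1..N}. Z n \<in> carrier_mat 3 3"
    and Zsym: "\<forall>n \<in> {1..N}. transpose_mat (Z n) = Z n"
    and Xinv: "invertible_mat (Xmat N par Z)"
    and Udim: "U \<in> carrier_mat (3*N) (3*N)"
    and Uorth: "transpose_mat U * U = 1\<^sub>m (3*N)" "U * transpose_mat U = 1\<^sub>m (3*N)"
    and lampos: "\<forall>i < 3*N. lam i > 0"
    and eig: "Xmat N par Z * transpose_mat (Xmat N par Z) = U * mat_diag (3*N) lam * transpose_mat U"
    and mu_pos: "0 < \<mu>"
    and mu_lt: "\<mu> < lambda_min (mat_diag (3*N) (\<lambda>i. 1 / sqrt (lam i)) * transpose_mat U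
                  * (Xmat N par Z + transpose_mat (Xmat N par Z)) * U
                  * mat_diag (3*N) (\<lambda>i. 1 / sqrt (lam i)))"
  shows "spec_norm (1\<^sub>m (3*N) - \<mu> \<cdot>\<^sub>m Xmat N par Z) < 1"
proof -
  have T: "dim_row (Tmat N) = 3*N" unfolding Tmat_def by (simp only: dim_row_mat)
  have dr: "dim_row (Xmat N par Z) = 3*N"
    unfolding Xmat_def Mmat_def by (simp only: index_smult_mat index_mult_mat T)
  have sq: "square_mat (Xmat N par Z)" using Xinv unfolding invertible_mat_def by (rule conjunct1)
  have dc: "dim_col (Xmat N par Z) = dim_row (Xmat N par Z)" using sq by (simp only: square_mat.simps)
  have X: "Xmat N par Z \<in> carrier_mat (3*N) (3*N)"
    by (rule carrier_matI) (simp only: dr, simp only: dc dr)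
  show ?thesis
    by (rule main_abstract[OF _ X Xinv Udim Uorth lampos eig mu_pos mu_lt]) (use N in simp)
qed

end
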